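(* For any $\delta>0$ there exists a fair allocation instance with additive valuations and positive entitlements summing to $1$ in which some agent $a_i$ satisfies $\frac{\mathsf{APS}_i}{\mathsf{WMMS}_i}<\delta$.
   Context: A fair allocation instance consists of agents $a_1,\dots,a_n$, a finite set $M$ of $m$ indivisible goods, valuations $v_i:2^M\to\mathbb{R}_{\ge0}$, and entitlements $b_1,\dots,b_n>0$. A valuation is additive if $v(S)=\sum_{g\in S}v(\{g\})$. Let $\Pi_n$ be the set of partitions $(S_1,\dots,S_n)$ of $M$ into $n$ bundles. The weighted maximin share is $\mathsf{WMMS}_i=\max_{S\in\Pi_n}\min_{j\in[n]}v_i(S_j)\frac{b_i}{b_j}$. With $\mathcal{P}=\{p\in\mathbb{R}^m_{\ge0}:\sum_g p_g=1\}$ and $p(S)=\sum_{g\in S}p_g$, the AnyPrice share is $\mathsf{APS}_i=\min_{p\in\mathcal{P}}\max_{S\subseteq M,\ p(S)\le b_i}v_i(S)$. *)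

theory Defs
  imports Complex_Main
begin

definition additive_on :: "nat set \<Rightarrow> (nat set \<Rightarrow> real) \<Rightarrow> bool" where
  "additive_on M v \<longleftrightarrow> (\<forall>S\<subseteq>M. v S = (\<Sum>g\<in>S. v {g}))"

definition nonneg_on :: "nat set \<Rightarrow> (nat set \<Rightarrow> real) \<Rightarrow> bool" where
  "nonneg_on M v \<longleftrightarrow> (\<forall>S\<subseteq>M. v S \<ge> 0)"

definition is_partition :: "nat set \<Rightarrow> nat \<Rightarrow> (nat \<Rightarrow> nat set) \<Rightarrow> bool" where
  "is_partition M n S \<longleftrightarrow> (\<Union>j<n. S j) = M \<and>
     (\<forall>j<n. \<forall>k<n. j \<noteq> k \<longrightarrow> S j \<inter> S k = {})"

definition WMMS :: "nat \<Rightarrow> nat set \<Rightarrow> (nat \<Rightarrow> nat set \<Rightarrow> real) \<Rightarrow> (nat \<Rightarrow> real) \<Rightarrow> nat \<Rightarrow> real" where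
  "WMMS n M v b i = Max {Min {v i (S j) * b i / b j | j. j < n} | S. is_partition M n S}"

definition price_vectors :: "nat set \<Rightarrow> (nat \<Rightarrow> real) set" where
  "price_vectors M = {p. (\<forall>g\<in>M. p g \<ge> 0) \<and> (\<Sum>g\<in>M. p g) = 1}"

text \<open>AnyPrice share of agent i (the minimum over prices is attained; we write it as Inf).\<close>
definition APS :: "nat set \<Rightarrow> (nat \<Rightarrow> nat set \<Rightarrow> real) \<Rightarrow> (nat \<Rightarrow> real) \<Rightarrow> nat \<Rightarrow> real" where
  "APS M v b i = Inf {Max {v i S | S. S \<subseteq> M \<and> (\<Sum>g\<in>S. p g) \<le> b i} | p. p \<in> price_vectors M}"

end

theory Submission
  imports Defs
begin

lemma wmms_pos:
  defines "M \<equiv> {0::nat,1}"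
  defines "v \<equiv> (\<lambda>(j::nat) (S::nat set). real (card S))"
  defines "b \<equiv> (\<lambda>j::nat. if j = 0 then 1/4 else (3/4::real))"
  shows "WMMS 2 M v b 0 > 0"
proof -
  let ?X = "{Min {v 0 (S j) * b 0 / b j | j. j < 2} | S. is_partition M 2 S}"
  have X_sub: "?X \<subseteq> (\<lambda>(k,j). real k * b 0 / b j) ` ({..2} \<times> {..<2})"
  proof
    fix x assume "x \<in> ?X"
    then obtain S where P: "is_partition M 2 S" and x: "x = Min {v 0 (S j) * b 0 / b j | j. j < 2}"
      by blast
    have eq: "{v 0 (S j) * b 0 / b j | j. j < 2} = (\<lambda>j. v 0 (S j) * b 0 / b j) ` {..<2}" by auto
    have ne: "{..<(2::nat)} \<noteq> {}" by (metis lessThan_iff emptyE pos2 ex_in_conv)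
    have "x \<in> (\<lambda>j. v 0 (S j) * b 0 / b j) ` {..<2}"
      unfolding x eq by (rule Min_in) (use ne in auto)
    then obtain j where j: "j < 2" "x = v 0 (S j) * b 0 / b j" by auto
    have "S j \<subseteq> M" using P j(1) unfolding is_partition_def by blast
    hence "card (S j) \<le> 2" unfolding M_def
      by (metis card_mono finite.emptyI finite.insertI card_2_iff zero_neq_one)
    thus "x \<in> (\<lambda>(k,j). real k * b 0 / b j) ` ({..2} \<times> {..<2})"
      using j unfolding v_def by (auto intro!: image_eqI[where x="(card (S j), j)"])
  qed
  have fin: "finite ?X" by (rule finite_subset[OF X_sub]) auto
  define S0 where "S0 = (\<lambda>j::nat. {j})"
  have P0: "is_partition M 2 S0" unfolding is_partition_def S0_def M_def
    by (auto simp: lessThan_def intro: exI[where x=0])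
  have eq0: "{v 0 (S0 j) * b 0 / b j | j. j < 2} = {1, 1/3}"
  proof -
    have "{v 0 (S0 j) * b 0 / b j | j. j < 2} = (\<lambda>j. v 0 (S0 j) * b 0 / b j) ` {0,1}"
      by (simp only: lessThan_nat_numeral lessThan_0 Setcompr_eq_image[symmetric]) auto
    also have "\<dots> = {1, 1/3}" unfolding v_def S0_def b_def by auto
    finally show ?thesis .
  qed
  have mem: "1/3 \<in> ?X"
  proof -
    have "Min {v 0 (S0 j) * b 0 / b j | j. j < 2} = 1/3" unfolding eq0 by simp
    thus ?thesis using P0 by (metis (mono_tags, lifting) mem_Collect_eq)
  qed
  have "1/3 \<le> Max ?X" by (rule Max_ge[OF fin mem])
  thus ?thesis unfolding WMMS_def by simp
qed

lemma aps_zero: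
  defines "M \<equiv> {0::nat,1}"
  defines "v \<equiv> (\<lambda>(j::nat) (S::nat set). real (card S))"
  defines "b \<equiv> (\<lambda>j::nat. if j = 0 then 1/4 else (3/4::real))"
  shows "APS M v b 0 = 0"
  unfolding APS_def
proof (rule cInf_eq_minimum)
  let ?p = "\<lambda>g::nat. 1/2::real"
  have pv: "?p \<in> price_vectors M" unfolding price_vectors_def M_def by simp
  have "{v 0 S | S. S \<subseteq> M \<and> (\<Sum>g\<in>S. ?p g) \<le> b 0} = {0}"
  proof -
    have "S = {}" if "S \<subseteq> M" "(\<Sum>g\<in>S. ?p g) \<le> b 0" for S
    proof (rule ccontr)
      assume "S \<noteq> {}"
      moreover have "finite S" using that(1) finite_subset unfolding M_def by blast
      ultimately have "card S \<ge> 1" by (simp add: Suc_leI card_gt_0_iff)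
      thus False using that(2) unfolding b_def by (simp add: b_def)
    qed
    hence "{v 0 S | S. S \<subseteq> M \<and> (\<Sum>g\<in>S. ?p g) \<le> b 0} \<subseteq> {v 0 {}}" by blast
    moreover have "v 0 {} \<in> {v 0 S | S. S \<subseteq> M \<and> (\<Sum>g\<in>S. ?p g) \<le> b 0}"
      by (rule CollectI, rule exI[of _ "{}"]) (simp add: b_def)
    ultimately have "{v 0 S | S. S \<subseteq> M \<and> (\<Sum>g\<in>S. ?p g) \<le> b 0} = {v 0 {}}" by blast
    moreover have "v 0 {} = 0" unfolding v_def by simp
    ultimately show ?thesis by simp
  qed
  hence m0: "Max {v 0 S | S. S \<subseteq> M \<and> (\<Sum>g\<in>S. ?p g) \<le> b 0} = 0" by simp
  show "0 \<in> {Max {v 0 S | S. S \<subseteq> M \<and> (\<Sum>g\<in>S. p g) \<le> b 0} | p. p \<in> price_vectors M}"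
    by (rule CollectI, rule exI[of _ ?p], rule conjI[OF m0[symmetric] pv])
next
  fix x assume "x \<in> {Max {v 0 S | S. S \<subseteq> M \<and> (\<Sum>g\<in>S. p g) \<le> b 0} | p. p \<in> price_vectors M}"
  then obtain p where x: "x = Max {v 0 S | S. S \<subseteq> M \<and> (\<Sum>g\<in>S. p g) \<le> b 0}" by blast
  have fin: "finite {v 0 S | S. S \<subseteq> M \<and> (\<Sum>g\<in>S. p g) \<le> b 0}"
  proof (rule finite_subset)
    show "{v 0 S | S. S \<subseteq> M \<and> (\<Sum>g\<in>S. p g) \<le> b 0} \<subseteq> v 0 ` Pow M" by blast
    show "finite (v 0 ` Pow M)" unfolding M_def by (intro finite_imageI finite_Pow_iff[THEN iffD2]) simp
  qed
  have "v 0 {} \<in> {v 0 S | S. S \<subseteq> M \<and> (\<Sum>g\<in>S. p g) \<le> b 0}"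
    by (rule CollectI, rule exI[of _ "{}"]) (simp add: b_def)
  hence "v 0 {} \<le> x" unfolding x by (rule Max_ge[OF fin])
  thus "0 \<le> x" unfolding v_def by simp
qed

theorem proposition1:
  fixes \<delta> :: real
  assumes "\<delta> > 0"
  shows "\<exists>(n::nat) (M::nat set) (v::nat \<Rightarrow> nat set \<Rightarrow> real) (b::nat \<Rightarrow> real) (i::nat).
           n \<ge> 1 \<and> finite M \<and>
           (\<forall>j<n. additive_on M (v j) \<and> nonneg_on M (v j)) \<and>
           (\<forall>j<n. b j > 0) \<and> (\<Sum>j<n. b j) = 1 \<and>
           i < n \<and> WMMS n M v b i > 0 \<and>
           APS M v b i / WMMS n M v b i < \<delta>"
proof -
  let ?M = "{0::nat,1}"
  let ?v = "(\<lambda>(j::nat) (S::nat set). real (card S))"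
  let ?b = "(\<lambda>j::nat. if j = 0 then 1/4 else (3/4::real))"
  have add: "additive_on ?M (?v j) \<and> nonneg_on ?M (?v j)" for j :: nat
    unfolding additive_on_def nonneg_on_def
  proof (intro conjI allI impI)
    fix S assume "S \<subseteq> ?M"
    thus "?v j S = (\<Sum>g\<in>S. ?v j {g})" by simp
  qed simp
  have sum: "(\<Sum>j<2. ?b j) = 1" by (simp add: numeral_2_eq_2)
  show ?thesis
    apply (rule exI[where x=2], rule exI[where x="?M"], rule exI[where x="?v"],
           rule exI[where x="?b"], rule exI[where x=0])
    using add sum wmms_pos aps_zero assms by simp
qed

end
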